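(* Let $H$ be an infinite-dimensional separable complex Hilbert space with orthonormal basis $(e_i)_{i\in\mathbb{N}}$, and let $D=\sum_{i\in\mathbb{N}}\lambda_i\, e_i\otimes e_i$ be a (possibly unbounded) diagonal operator with $\lambda_i\neq\lambda_j$ for all $i\neq j$. Suppose that $\sigma(D)=\overline{\{\lambda_i:i\in\mathbb{N}\}}$ is a perfect set. Then there exist $u,v\in H$ such that $\sigma_p(D+u\otimes v)=\emptyset$. Moreover, for every $\delta>0$, $u,v$ can be chosen so that in addition $\|u\otimes v\|<\delta$.
   Context: For $u,v\in H$, $u\otimes v$ denotes the bounded rank one operator $h\mapsto\langle h,v\rangle u$. The (possibly unbounded) diagonal operator $D$ is defined on the domain $\{x\in H:\sum_i|\lambda_i|^2|\langle x,e_i\rangle|^2<\infty\}$ by $Dx=\sum_i\lambda_i\langle x,e_i\rangle e_i$; $D+u\otimes v$ has the same domain. $\sigma$ denotes the spectrum and $\sigma_p$ the point spectrum (set of eigenvalues). A set is perfect if it has no isolated points. *)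

theory Defs
  imports "HOL-Analysis.Analysis"
begin

text \<open>The separable infinite-dimensional Hilbert space H with orthonormal basis (e_i)
  is modelled by its coordinates: H = l^2(N) of complex sequences, e_i = indicator of i.\<close>

definition l2 :: "(nat \<Rightarrow> complex) set" where
  "l2 = {x. summable (\<lambda>i. (cmod (x i))^2)}"

definition l2norm :: "(nat \<Rightarrow> complex) \<Rightarrow> real" where
  "l2norm x = sqrt (\<Sum>i. (cmod (x i))^2)"

definition l2inner :: "(nat \<Rightarrow> complex) \<Rightarrow> (nat \<Rightarrow> complex) \<Rightarrow> complex" where
  "l2inner x y = (\<Sum>i. x i * cnj (y i))"

definition rank_one :: "(nat \<Rightarrow> complex) \<Rightarrow> (nat \<Rightarrow> complex) \<Rightarrow> (nat \<Rightarrow> complex) \<Rightarrow> (nat \<Rightarrow> complex)" where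
  "rank_one u v = (\<lambda>h i. l2inner h v * u i)"

definition opnorm :: "((nat \<Rightarrow> complex) \<Rightarrow> (nat \<Rightarrow> complex)) \<Rightarrow> real" where
  "opnorm T = Sup {l2norm (T h) | h. h \<in> l2 \<and> l2norm h \<le> 1}"

definition diag_dom :: "(nat \<Rightarrow> complex) \<Rightarrow> (nat \<Rightarrow> complex) set" where
  "diag_dom lam = {x \<in> l2. summable (\<lambda>i. (cmod (lam i))^2 * (cmod (x i))^2)}"

definition diag_op :: "(nat \<Rightarrow> complex) \<Rightarrow> (nat \<Rightarrow> complex) \<Rightarrow> (nat \<Rightarrow> complex)" where
  "diag_op lam x = (\<lambda>i. lam i * x i)"

definition point_spectrum :: "(nat \<Rightarrow> complex) set \<Rightarrow> ((nat \<Rightarrow> complex) \<Rightarrow> (nat \<Rightarrow> complex)) \<Rightarrow> complex set" where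
  "point_spectrum Dom T = {\<mu>. \<exists>x\<in>Dom. x \<noteq> (\<lambda>_. 0) \<and> T x = (\<lambda>i. \<mu> * x i)}"

definition perfect_set :: "complex set \<Rightarrow> bool" where
  "perfect_set S \<longleftrightarrow> closed S \<and> (\<forall>z\<in>S. z islimpt S)"

end

theory Submission
  imports Defs
begin


definition rr :: "(nat \<Rightarrow> complex) \<Rightarrow> (nat \<Rightarrow> complex) \<Rightarrow> nat \<Rightarrow> nat \<Rightarrow> complex" where
  "rr lam ep N i = ep i * (\<Prod>k<N. if k = i then 1 else 1 + ep k / (lam k - lam i))"

lemma pf_term:
  fixes a L m r e :: complex
  assumes "a \<noteq> m" "L \<noteq> m" "L \<noteq> a"
  shows "r / (a - m) * (e / (L - m)) = r * (e / (L - a)) / (a - m) + e * (r / (a - L)) / (L - m)"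
proof -
  have "L - m \<noteq> 0" "a - m \<noteq> 0" "L - a \<noteq> 0" "a - L \<noteq> 0" using assms by auto
  then show ?thesis by (simp add: divide_simps) (simp add: algebra_simps)
qed

lemma partial_fractions:
  assumes "inj lam" "m \<notin> lam ` {..<N}"
  shows "(\<Prod>k<N. 1 + ep k / (lam k - m)) = 1 + (\<Sum>i<N. rr lam ep N i / (lam i - m))"
  using assms(2)
proof (induction N arbitrary: m)
  case 0
  then show ?case by simp
next
  case (Suc N)
  have mN: "m \<notin> lam ` {..<N}" and mL: "lam N \<noteq> m" using Suc.prems by auto
  have LN: "lam N \<notin> lam ` {..<N}" using assms(1) by (auto dest: injD)
  have r1: "rr lam ep (Suc N) i = rr lam ep N i * (1 + ep N / (lam N - lam i))" if "i < N" for i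
    using that by (simp add: rr_def)
  have r2: "rr lam ep (Suc N) N = ep N * (1 + (\<Sum>i<N. rr lam ep N i / (lam i - lam N)))"
  proof -
    have "rr lam ep (Suc N) N = ep N * (\<Prod>k<N. 1 + ep k / (lam k - lam N))"
    proof -
      have "(\<Prod>k<N. if k = N then 1 else 1 + ep k / (lam k - lam N)) = (\<Prod>k<N. 1 + ep k / (lam k - lam N))"
        by (rule prod.cong) auto
      then show ?thesis unfolding rr_def prod.lessThan_Suc by simp
    qed
    then show ?thesis using Suc.IH[OF LN] by simp
  qed
  have "(\<Prod>k<Suc N. 1 + ep k / (lam k - m)) = (1 + (\<Sum>i<N. rr lam ep N i / (lam i - m))) * (1 + ep N / (lam N - m))"
    using Suc.IH[OF mN] by simp
  also have "\<dots> = 1 + (\<Sum>i<N. rr lam ep N i / (lam i - m)) + ep N / (lam N - m)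
      + (\<Sum>i<N. rr lam ep N i / (lam i - m) * (ep N / (lam N - m)))"
    by (simp only: distrib_left distrib_right sum_distrib_right mult_1_left mult_1_right add.assoc)
  also have "(\<Sum>i<N. rr lam ep N i / (lam i - m) * (ep N / (lam N - m))) =
      (\<Sum>i<N. rr lam ep N i * (ep N / (lam N - lam i)) / (lam i - m) + ep N * (rr lam ep N i / (lam i - lam N)) / (lam N - m))"
  proof (intro sum.cong refl pf_term)
    fix i assume i: "i \<in> {..<N}"
    show "lam i \<noteq> m" using i mN by auto
    show "lam N \<noteq> m" by fact
    show "lam N \<noteq> lam i" using i assms(1) by (auto dest: injD)
  qed
  also have "1 + (\<Sum>i<N. rr lam ep N i / (lam i - m)) + ep N / (lam N - m) + \<dots> =
     1 + ((\<Sum>i<N. rr lam ep (Suc N) i / (lam i - m)) + rr lam ep (Suc N) N / (lam N - m))"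
    by (simp add: r1 r2 sum.distrib algebra_simps sum_distrib_left sum_divide_distrib add_divide_distrib)
  also have "\<dots> = 1 + (\<Sum>i<Suc N. rr lam ep (Suc N) i / (lam i - m))" by simp
  finally show ?case .
qed



lemma baire_choice:
  fixes lam :: "nat \<Rightarrow> complex"
  assumes inj: "inj lam" and perf: "perfect_set (closure (range lam))" and r: "r > 0"
  shows "\<exists>z. z \<notin> range lam \<and> cmod (z - lam k) < r \<and> (\<forall>N. \<exists>i\<ge>N. cmod (z - lam i) < (1/2)^i)"
proof -
  define K where "K = closure (range lam)"
  define U where "U N = K \<inter> ((\<Union>i\<in>{N..}. ball (lam i) ((1/2)^i)) - {lam N})" for N
  have cl: "closed K" unfolding K_def by simp
  have op: "openin (top_of_set K) (U N)" for N
    unfolding U_def by (intro openin_open_Int open_Diff) auto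
  have dense: "K \<subseteq> closure (U N)" for N
  proof
    fix z assume z: "z \<in> K"
    show "z \<in> closure (U N)"
    proof (rule iffD2[OF closure_approachable], intro allI impI)
      fix e :: real assume e: "e > 0"
      have "z islimpt K" using perf z unfolding perfect_set_def K_def by auto
      hence "z islimpt range lam" unfolding K_def by (simp add: limpt_of_closure)
      hence inf: "infinite (range lam \<inter> ball z e)" using e by (simp add: islimpt_eq_infinite_ball)
      have "\<exists>i>N. lam i \<in> ball z e"
      proof (rule ccontr)
        assume "\<not> ?thesis"
        hence "range lam \<inter> ball z e \<subseteq> lam ` {..N}" by (auto simp: not_less)
        hence "finite (range lam \<inter> ball z e)" by (rule finite_subset) auto
        thus False using inf by simp
      qed
      then obtain i where i: "i > N" "lam i \<in> ball z e" by blast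
      have "lam i \<noteq> lam N" using i(1) inj by (auto dest: injD)
      hence "lam i \<in> U N"
        unfolding U_def K_def using i inj by (auto simp: injD closure_subset[THEN subsetD] intro!: bexI[of _ i])
      moreover have "dist (lam i) z < e" using i by (simp add: dist_commute)
      ultimately show "\<exists>y\<in>U N. dist y z < e" by blast
    qed
  qed
  have "K \<subseteq> closure (\<Inter>(range U))"
    by (rule Baire[OF cl]) (use op dense in auto)
  moreover have "lam k \<in> K" unfolding K_def by (simp add: closure_subset[THEN subsetD])
  ultimately have "lam k \<in> closure (\<Inter>(range U))" by blast
  then obtain z where z: "z \<in> \<Inter>(range U)" "dist z (lam k) < r"
    using r by (auto simp: closure_approachable)
  have "z \<notin> range lam"
  proof
    assume "z \<in> range lam" then obtain N where "z = lam N" by auto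
    with z(1) show False unfolding U_def by auto
  qed
  moreover have "\<forall>N. \<exists>i\<ge>N. cmod (z - lam i) < (1/2)^i"
  proof
    fix N from z(1) have "z \<in> U N" by auto
    then obtain i where "i \<ge> N" "dist (lam i) z < (1/2)^i" unfolding U_def by auto
    thus "\<exists>i\<ge>N. cmod (z - lam i) < (1/2)^i" by (auto simp: dist_norm norm_minus_commute)
  qed
  ultimately show ?thesis using z(2) by (auto simp: dist_norm)
qed



definition dd :: "(nat \<Rightarrow> complex) \<Rightarrow> nat \<Rightarrow> real" where
  "dd lam i = Min (insert 1 ((\<lambda>k. cmod (lam k - lam i)) ` {..<i}))"

definition rho :: "(nat \<Rightarrow> complex) \<Rightarrow> real \<Rightarrow> nat \<Rightarrow> real" where
  "rho lam eta i = eta * (1/4)^i * dd lam i * exp (- (real i / dd lam i))"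

lemma dd_pos: "inj lam \<Longrightarrow> 0 < dd lam i"
  unfolding dd_def by (subst Min_gr_iff) (auto dest: injD)

lemma dd_le1: "dd lam i \<le> 1"
  unfolding dd_def by (rule Min_le) auto

lemma dd_le: "k < i \<Longrightarrow> dd lam i \<le> cmod (lam k - lam i)"
  unfolding dd_def by (rule Min_le) auto

lemma rho_pos: "inj lam \<Longrightarrow> 0 < eta \<Longrightarrow> 0 < rho lam eta i"
  unfolding rho_def using dd_pos[of lam i] by simp

lemma rho_le: assumes "inj lam" "0 < eta" "eta \<le> 1"
  shows "rho lam eta i \<le> (1/4)^i * dd lam i" "rho lam eta i \<le> (1/4)^i" "rho lam eta i \<le> 1"
proof -
  have d: "0 < dd lam i" "dd lam i \<le> 1" using dd_pos[OF assms(1)] dd_le1 by auto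
  have e: "exp (- (real i / dd lam i)) \<le> 1" using d by simp
  have "rho lam eta i \<le> 1 * (1/4)^i * dd lam i * 1"
    unfolding rho_def using assms d e by (intro mult_mono) auto
  thus 1: "rho lam eta i \<le> (1/4)^i * dd lam i" by simp
  also have "\<dots> \<le> (1/4)^i * 1" using d by (intro mult_left_mono) auto
  finally show 2: "rho lam eta i \<le> (1/4)^i" by simp
  also have "(1/4::real)^i \<le> 1" by (simp add: power_le_one)
  finally show "rho lam eta i \<le> 1" .
qed

lemma amgm: fixes q d :: real assumes "0 \<le> q" "0 < d" shows "q / d \<le> q + q / d^2"
proof (cases "d \<ge> 1")
  case True
  then have "q / d \<le> q" using assms by (simp add: divide_le_eq mult_le_cancel_left1 mult_left_le)
  moreover have "0 \<le> q / d^2" using assms by simp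
  ultimately show ?thesis by linarith
next
  case False
  then have "q / d \<le> q / d^2" using assms
    by (intro divide_left_mono) (auto simp: power2_eq_square mult_le_cancel_right1 mult_right_le_one_le)
  then show ?thesis using assms by simp
qed

lemma geom_sum_le2: "(\<Sum>k<N. (1/2::real)^k) \<le> 2"
proof -
  have "(\<Sum>k<N. (1/2::real)^k) \<le> (\<Sum>k. (1/2::real)^k)"
    by (rule sum_le_suminf) (auto simp: summable_geometric)
  also have "\<dots> = 2" using suminf_geometric[of "1/2::real"] by simp
  finally show ?thesis .
qed



context
  fixes lam :: "nat \<Rightarrow> complex" and ep :: "nat \<Rightarrow> complex" and eta :: real
  assumes inj: "inj lam"
    and eta: "0 < eta" "eta \<le> 1"
    and epb: "\<And>k. cmod (ep k) \<le> rho lam eta k"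
    and epz: "\<And>k. lam k + ep k \<notin> range lam"
begin

definition ff :: "nat \<Rightarrow> nat \<Rightarrow> complex" where
  "ff i k = (if k = i then 1 else 1 + ep k / (lam k - lam i))"

definition TT :: "nat \<Rightarrow> nat \<Rightarrow> real" where
  "TT i k = (if k < i then 1 / dd lam i else 0) + (1/2)^k"

definition ww :: "nat \<Rightarrow> complex" where
  "ww i = ep i * prodinf (ff i)"

lemma ep_ne: "ep k \<noteq> 0"
  using epz[of k] by auto

lemma lam_ne: "k \<noteq> i \<Longrightarrow> lam k \<noteq> lam i"
  using inj by (auto dest: injD)

lemma ratio_bound:
  assumes "k \<noteq> i" shows "cmod (ep k / (lam k - lam i)) \<le> TT i k"
proof (cases "k < i")
  case True
  have d: "0 < dd lam i" "dd lam i \<le> cmod (lam k - lam i)" using dd_pos[OF inj] dd_le[OF True] by auto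
  have "cmod (ep k / (lam k - lam i)) = cmod (ep k) / cmod (lam k - lam i)" by (simp add: norm_divide)
  also have "\<dots> \<le> 1 / dd lam i"
    using epb[of k] rho_le(3)[OF inj eta, of k] d by (intro frac_le) auto
  moreover have "(0::real) \<le> (1/2)^k" by simp
  moreover have "TT i k = 1 / dd lam i + (1/2)^k" using True by (simp add: TT_def)
  ultimately show ?thesis by linarith
next
  case False
  hence ik: "i < k" using assms by auto
  have d: "0 < dd lam k" "dd lam k \<le> cmod (lam k - lam i)"
    using dd_pos[OF inj] dd_le[OF ik, of lam] by (auto simp: norm_minus_commute)
  have "cmod (ep k / (lam k - lam i)) = cmod (ep k) / cmod (lam k - lam i)" by (simp add: norm_divide)
  also have "\<dots> \<le> ((1/4)^k * dd lam k) / dd lam k"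
    using epb[of k] rho_le(1)[OF inj eta, of k] d by (intro frac_le) auto
  also have "\<dots> = (1/4)^k" using d by simp
  also have "\<dots> \<le> (1/2)^k" by (intro power_mono) auto
  finally show ?thesis using False unfolding TT_def by simp
qed

lemma TT_nonneg: "0 \<le> TT i k"
  unfolding TT_def using dd_pos[OF inj, of i] by simp

lemma norm_ff: "cmod (ff i k) \<le> 1 + TT i k"
proof (cases "k = i")
  case True thus ?thesis using TT_nonneg[of i k] unfolding ff_def by simp
next
  case False
  have "cmod (ff i k) \<le> cmod 1 + cmod (ep k / (lam k - lam i))"
    unfolding ff_def using False norm_triangle_ineq[of 1 "ep k / (lam k - lam i)"] by simp
  thus ?thesis using ratio_bound[OF False] by simp
qed

lemma sumTT: "(\<Sum>k<N. TT i k) \<le> real i / dd lam i + 2"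
proof -
  have "(\<Sum>k<N. (if k < i then 1 / dd lam i else 0)) = (\<Sum>k\<in>{k\<in>{..<N}. k < i}. 1 / dd lam i)"
    by (rule sum.inter_filter[symmetric]) simp
  also have "\<dots> = real (card {k\<in>{..<N}. k < i}) * (1 / dd lam i)" by simp
  also have "\<dots> \<le> real i * (1 / dd lam i)"
  proof (intro mult_right_mono)
    have "card {k\<in>{..<N}. k < i} \<le> card {..<i}" by (intro card_mono) auto
    thus "real (card {k\<in>{..<N}. k < i}) \<le> real i" by simp
    show "0 \<le> 1 / dd lam i" using dd_pos[OF inj, of i] by simp
  qed
  finally have 1: "(\<Sum>k<N. (if k < i then 1 / dd lam i else 0)) \<le> real i / dd lam i" by simp
  show ?thesis unfolding TT_def sum.distrib using 1 geom_sum_le2[of N] by linarith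
qed

lemma prod_ff_bound: "cmod (\<Prod>k<N. ff i k) \<le> exp (real i / dd lam i + 2)"
proof -
  have "cmod (\<Prod>k<N. ff i k) = (\<Prod>k<N. cmod (ff i k))" by (simp add: prod_norm)
  also have "\<dots> \<le> (\<Prod>k<N. exp (TT i k))"
  proof (intro prod_mono conjI)
    fix k show "0 \<le> cmod (ff i k)" by simp
    show "cmod (ff i k) \<le> exp (TT i k)" using norm_ff[of i k] exp_ge_add_one_self[of "TT i k"] by linarith
  qed
  also have "\<dots> = exp (\<Sum>k<N. TT i k)" by (simp add: exp_sum)
  also have "\<dots> \<le> exp (real i / dd lam i + 2)" using sumTT by simp
  finally show ?thesis .
qed

lemma rr_eq: "rr lam ep N i = ep i * (\<Prod>k<N. ff i k)"
  unfolding rr_def ff_def by simp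

lemma rr_bound: "cmod (rr lam ep N i) \<le> eta * exp 2 * (1/4)^i"
proof -
  have d: "0 < dd lam i" using dd_pos[OF inj] by simp
  have "cmod (rr lam ep N i) = cmod (ep i) * cmod (\<Prod>k<N. ff i k)" by (simp add: rr_eq norm_mult)
  also have "\<dots> \<le> rho lam eta i * exp (real i / dd lam i + 2)"
    using epb[of i] prod_ff_bound[of i N] rho_pos[OF inj eta(1), of i] by (intro mult_mono) auto
  also have "\<dots> \<le> (eta * (1/4)^i * exp (- (real i / dd lam i))) * exp (real i / dd lam i + 2)"
    unfolding rho_def using d dd_le1[of lam i] eta by (intro mult_right_mono) (auto intro!: mult_right_le_one_le)
  also have "\<dots> = eta * exp 2 * (1/4)^i"
    by (simp add: exp_add exp_minus field_simps)
  finally show ?thesis .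
qed

lemma ff_ne: "ff i k \<noteq> 0"
proof (cases "k = i")
  case True thus ?thesis by (simp add: ff_def)
next
  case False
  have ne: "lam k - lam i \<noteq> 0" using lam_ne[OF False] by simp
  have "ff i k = (lam k + ep k - lam i) / (lam k - lam i)"
    using False ne unfolding ff_def by (simp add: field_simps)
  moreover have "lam k + ep k - lam i \<noteq> 0" using epz[of k] by auto
  ultimately show ?thesis using ne by simp
qed

lemma ff_conv: "convergent_prod (ff i)"
proof -
  have "summable (\<lambda>k. norm (ff i k - 1))"
  proof (rule summable_comparison_test_ev)
    show "summable (\<lambda>k. (1/2::real)^k)" by (simp add: summable_geometric)
    show "eventually (\<lambda>k. norm (norm (ff i k - 1)) \<le> (1/2)^k) sequentially"
      unfolding eventually_sequentially
    proof (intro exI[of _ "Suc i"] allI impI)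
      fix k assume k: "Suc i \<le> k"
      hence "k \<noteq> i" "\<not> k < i" by auto
      thus "norm (norm (ff i k - 1)) \<le> (1/2)^k"
        using ratio_bound[of k i] unfolding ff_def TT_def by simp
    qed
  qed
  thus ?thesis by (intro abs_convergent_prod_imp_convergent_prod summable_imp_abs_convergent_prod)
qed

lemma prod_lessThan_LIMSEQ: "convergent_prod f \<Longrightarrow> (\<lambda>n. \<Prod>k<n. f k) \<longlonglongrightarrow> prodinf (f :: nat \<Rightarrow> complex)"
  apply (drule convergent_prod_LIMSEQ)
  apply (rule LIMSEQ_imp_Suc)
  apply (simp add: lessThan_Suc_atMost)
  done

lemma rr_lim: "(\<lambda>N. rr lam ep N i) \<longlonglongrightarrow> ww i"
  unfolding rr_eq ww_def by (intro tendsto_mult tendsto_const prod_lessThan_LIMSEQ ff_conv)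

lemma ww_ne: "ww i \<noteq> 0"
  unfolding ww_def using ep_ne prodinf_nonzero[OF ff_conv ff_ne] by simp

lemma ww_bound: "cmod (ww i) \<le> eta * exp 2 * (1/4)^i"
  by (rule LIMSEQ_le_const2[OF tendsto_norm[OF rr_lim]]) (simp add: rr_bound)

lemma key:
  assumes mr: "m \<notin> range lam" and mz: "\<And>k. lam k + ep k \<noteq> m"
    and sm: "summable (\<lambda>i. (1/4::real)^i / (cmod (lam i - m))^2)"
  shows "summable (\<lambda>i. norm (ww i / (lam i - m))) \<and> 1 + (\<Sum>i. ww i / (lam i - m)) \<noteq> 0"
proof -
  have dpos: "0 < cmod (lam i - m)" for i using mr by auto
  define M where "M i = eta * exp 2 * ((1/4)^i + (1/4)^i / (cmod (lam i - m))^2)" for i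
  have Msum: "summable M" unfolding M_def
    by (intro summable_mult summable_add sm) (simp add: summable_geometric)
  have bnd: "(1/4::real)^i / cmod (lam i - m) \<le> (1/4)^i + (1/4)^i / (cmod (lam i - m))^2" for i
    by (rule amgm) (use dpos in auto)
  define a where "a k n = (if k < n then rr lam ep n k / (lam k - m) else 0)" for k n
  have abnd: "norm (a k n) \<le> M k" for k n
  proof -
    have "norm (a k n) \<le> eta * exp 2 * (1/4)^k / cmod (lam k - m)"
      unfolding a_def using rr_bound[of n k] dpos[of k] eta
      by (auto simp: norm_divide intro!: divide_right_mono)
    also have "\<dots> = eta * exp 2 * ((1/4)^k / cmod (lam k - m))" by simp
    also have "\<dots> \<le> M k" unfolding M_def using bnd[of k] eta by (intro mult_left_mono) auto
    finally show ?thesis .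
  qed
  have alim: "(\<lambda>n. a k n) \<longlonglongrightarrow> ww k / (lam k - m)" for k
  proof (rule Lim_transform_eventually)
    show "(\<lambda>n. rr lam ep n k / (lam k - m)) \<longlonglongrightarrow> ww k / (lam k - m)"
      by (intro tendsto_divide tendsto_const rr_lim) (use dpos[of k] in auto)
    show "eventually (\<lambda>n. rr lam ep n k / (lam k - m) = a k n) sequentially"
      unfolding eventually_sequentially a_def by (intro exI[of _ "Suc k"]) auto
  qed
  have T: "eventually (\<lambda>n. summable (\<lambda>k. norm (a k n))) sequentially \<and>
           summable (\<lambda>n. norm (ww n / (lam n - m))) \<and>
           ((\<lambda>n. suminf (\<lambda>k. a k n)) \<longlongrightarrow> (\<Sum>k. ww k / (lam k - m))) sequentially"
    by (rule tannerys_theorem[OF alim _ Msum]) (auto intro!: always_eventually simp: abnd)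
  have sa: "suminf (\<lambda>k. a k n) = (\<Sum>k<n. rr lam ep n k / (lam k - m))" for n
  proof -
    have "suminf (\<lambda>k. a k n) = (\<Sum>k<n. a k n)" by (rule suminf_finite) (auto simp: a_def)
    also have "\<dots> = (\<Sum>k<n. rr lam ep n k / (lam k - m))" by (rule sum.cong) (auto simp: a_def)
    finally show ?thesis .
  qed
  define g where "g k = 1 + ep k / (lam k - m)" for k
  have pf: "(\<Prod>k<n. g k) = 1 + (\<Sum>k<n. rr lam ep n k / (lam k - m))" for n
    unfolding g_def by (rule partial_fractions[OF inj]) (use mr in auto)
  have lim1: "(\<lambda>n. \<Prod>k<n. g k) \<longlonglongrightarrow> 1 + (\<Sum>k. ww k / (lam k - m))"
    unfolding pf using T sa by (auto intro!: tendsto_add tendsto_const)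
  have gne: "g k \<noteq> 0" for k
  proof -
    have ne: "lam k - m \<noteq> 0" using dpos[of k] by auto
    have "g k = (lam k + ep k - m) / (lam k - m)" unfolding g_def using ne by (simp add: field_simps)
    thus ?thesis using mz[of k] ne by auto
  qed
  have gb: "norm (norm (g k - 1)) \<le> (1/4)^k + (1/4)^k / (cmod (lam k - m))^2" for k
  proof -
    have "norm (norm (g k - 1)) = cmod (ep k) / cmod (lam k - m)" unfolding g_def by (simp add: norm_divide)
    also have "\<dots> \<le> (1/4)^k / cmod (lam k - m)"
      using epb[of k] rho_le(2)[OF inj eta, of k] dpos[of k] by (intro divide_right_mono) auto
    also have "\<dots> \<le> (1/4)^k + (1/4)^k / (cmod (lam k - m))^2" by (rule bnd)
    finally show ?thesis .
  qed
  have gsum: "summable (\<lambda>k. norm (g k - 1))"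
  proof (rule summable_comparison_test')
    show "summable (\<lambda>k. (1/4::real)^k + (1/4)^k / (cmod (lam k - m))^2)"
      by (intro summable_add sm) (simp add: summable_geometric)
    show "norm (norm (g k - 1)) \<le> (1/4)^k + (1/4)^k / (cmod (lam k - m))^2" if "k \<ge> 0" for k
      by (rule gb)
  qed
  have gc: "convergent_prod g"
    by (intro abs_convergent_prod_imp_convergent_prod summable_imp_abs_convergent_prod gsum)
  have "1 + (\<Sum>k. ww k / (lam k - m)) = prodinf g"
    using LIMSEQ_unique[OF lim1 prod_lessThan_LIMSEQ[OF gc]] .
  moreover have "prodinf g \<noteq> 0" by (rule prodinf_nonzero[OF gc gne])
  ultimately show ?thesis using T by simp
qed

end


lemma half_sq: "(1/2::real)^i * (1/2)^i = (1/4)^i"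
  by (simp add: power_mult_distrib[symmetric])

lemma two_pow: "(2::real)^(i*2) = 4^i"
  by (metis mult.commute power_mult numeral_Bit0_eq_double power2_eq_square numeral_times_numeral mult_2 semiring_norm(12))

lemma two_pow2: "((2::real)^i)^2 = 4^i"
  by (simp add: power2_eq_square power_mult_distrib[symmetric])

lemma construct:
  fixes lam :: "nat \<Rightarrow> complex" and eta :: real
  assumes inj: "inj lam" and perf: "perfect_set (closure (range lam))" and eta: "0 < eta" "eta \<le> 1"
  shows "\<exists>u\<in>l2. \<exists>v\<in>l2.
            point_spectrum (diag_dom lam) (\<lambda>x i. diag_op lam x i + rank_one u v x i) = {}
          \<and> (\<forall>i. cmod (u i) \<le> (1/2)^i) \<and> (\<forall>i. cmod (v i) \<le> eta * exp 2 * (1/2)^i)"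
proof -
  have "\<forall>k. \<exists>z. z \<notin> range lam \<and> cmod (z - lam k) < rho lam eta k \<and> (\<forall>N. \<exists>i\<ge>N. cmod (z - lam i) < (1/2)^i)"
    using baire_choice[OF inj perf rho_pos[OF inj eta(1)]] by blast
  then obtain zeta where zeta: "\<And>k. zeta k \<notin> range lam" "\<And>k. cmod (zeta k - lam k) < rho lam eta k"
      "\<And>k N. \<exists>i\<ge>N. cmod (zeta k - lam i) < (1/2)^i"
    by metis
  define ep where "ep k = zeta k - lam k" for k
  have epb: "\<And>k. cmod (ep k) \<le> rho lam eta k" using zeta(2) unfolding ep_def by (simp add: less_imp_le)
  have epz: "\<And>k. lam k + ep k \<notin> range lam" using zeta(1) unfolding ep_def by simp
  note ctx = inj eta epb epz
  define w where "w = ww lam ep"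
  have wne: "w i \<noteq> 0" for i unfolding w_def by (rule ww_ne[OF ctx])
  have wb: "cmod (w i) \<le> eta * exp 2 * (1/4)^i" for i unfolding w_def by (rule ww_bound[OF ctx])
  define u where "u i = complex_of_real ((1/2)^i)" for i
  define v where "v i = cnj (w i / u i)" for i
  have une: "u i \<noteq> 0" for i by (simp add: u_def)
  have nu: "cmod (u i) = (1/2)^i" for i unfolding u_def by (simp only: norm_of_real) simp
  have uv: "u i * cnj (v i) = w i" for i using une[of i] by (simp add: v_def)
  have vne: "v i \<noteq> 0" for i using wne[of i] une[of i] by (simp add: v_def)
  have nv: "cmod (v i) \<le> eta * exp 2 * (1/2)^i" for i
  proof -
    have "cmod (v i) = cmod (w i) / (1/2)^i" by (simp add: v_def norm_divide nu)
    also have "\<dots> \<le> eta * exp 2 * (1/4)^i / (1/2)^i" by (intro divide_right_mono wb) auto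
    also have "\<dots> = eta * exp 2 * (1/2)^i" by (simp add: power_divide field_simps power_mult_distrib[symmetric])
    finally show ?thesis .
  qed
  have ul2: "u \<in> l2" unfolding l2_def using summable_geometric[of "1/4::real"]
    by (simp add: nu power2_eq_square power_mult_distrib[symmetric])
  have vl2': "summable (\<lambda>i. (cmod (v i))^2)"
  proof (rule summable_comparison_test')
    show "summable (\<lambda>i. (eta * exp 2)^2 * (1/4::real)^i)" by (intro summable_mult) (simp add: summable_geometric)
    fix i :: nat
    have "(cmod (v i))^2 \<le> (eta * exp 2 * (1/2)^i)^2" using nv[of i] by (intro power_mono) auto
    also have "\<dots> = (eta * exp 2)^2 * (1/4)^i" by (simp add: power_mult_distrib power2_eq_square half_sq[symmetric] mult_ac)
    finally show "norm ((cmod (v i))^2) \<le> (eta * exp 2)^2 * (1/4)^i" by simp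
  qed
  have vl2: "v \<in> l2" unfolding l2_def using vl2' by simp
  have ps: "point_spectrum (diag_dom lam) (\<lambda>x i. diag_op lam x i + rank_one u v x i) = {}"
  proof (rule ccontr)
    assume "\<not> ?thesis"
    then obtain m x where x: "x \<in> diag_dom lam" "x \<noteq> (\<lambda>_. 0)"
      and eqf: "(\<lambda>i. diag_op lam x i + rank_one u v x i) = (\<lambda>i. m * x i)"
      unfolding point_spectrum_def by blast
    define c where "c = l2inner x v"
    have eq: "lam i * x i + c * u i = m * x i" for i
      using fun_cong[OF eqf, of i] by (simp add: diag_op_def rank_one_def c_def)
    have xl2: "summable (\<lambda>i. (cmod (x i))^2)" using x(1) by (simp add: diag_dom_def l2_def)
    obtain j where xj: "x j \<noteq> 0" using x(2) by auto
    show False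
    proof (cases "c = 0")
      case True
      have mj: "m = lam j" using eq[of j] xj True by simp
      have xi0: "x i = 0" if "i \<noteq> j" for i
      proof (rule ccontr)
        assume "x i \<noteq> 0"
        hence "lam i = m" using eq[of i] True by simp
        hence "lam i = lam j" using mj by simp
        thus False using that inj by (auto dest: injD)
      qed
      have "c = (\<Sum>i. x i * cnj (v i))" by (simp add: c_def l2inner_def)
      also have "\<dots> = (\<Sum>i\<in>{j}. x i * cnj (v i))" by (rule suminf_finite) (auto simp: xi0)
      also have "\<dots> \<noteq> 0" using xj vne[of j] by simp
      finally show False using True by simp
    next
      case False
      have mr: "m \<notin> range lam"
      proof
        assume "m \<in> range lam" then obtain k where "m = lam k" by auto
        hence "c * u k = 0" using eq[of k] by simp
        thus False using False une[of k] by simp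
      qed
      have dne: "lam i - m \<noteq> 0" for i using mr by auto
      have xi: "x i = - c * u i / (lam i - m)" for i
        using eq[of i] dne[of i] by (simp add: field_simps)
      have sm: "summable (\<lambda>i. (1/4::real)^i / (cmod (lam i - m))^2)"
      proof -
        have "summable (\<lambda>i. (1 / (cmod c)^2) * (cmod (x i))^2)" by (intro summable_mult xl2)
        moreover have "(1 / (cmod c)^2) * (cmod (x i))^2 = (1/4::real)^i / (cmod (lam i - m))^2" for i
          using False by (simp add: xi norm_divide norm_mult nu power_divide power_mult_distrib
              field_simps two_pow two_pow2)
        ultimately show ?thesis by (simp only:)
      qed
      have mz: "lam k + ep k \<noteq> m" for k
      proof
        assume "lam k + ep k = m"
        hence zk: "zeta k = m" by (simp add: ep_def)
        have "(\<lambda>i. (1/4::real)^i / (cmod (lam i - m))^2) \<longlonglongrightarrow> 0" by (rule summable_LIMSEQ_zero[OF sm])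
        hence "eventually (\<lambda>i. (1/4::real)^i / (cmod (lam i - m))^2 < 1) sequentially"
          by (rule order_tendstoD) simp
        then obtain N where N: "\<And>i. i \<ge> N \<Longrightarrow> (1/4::real)^i / (cmod (lam i - m))^2 < 1"
          by (auto simp: eventually_sequentially)
        obtain i where i: "i \<ge> N" "cmod (m - lam i) < (1/2)^i" using zeta(3)[of N k] zk by auto
        have p: "0 < cmod (lam i - m)" using dne[of i] by simp
        have "(cmod (lam i - m))^2 < ((1/2)^i)^2"
          using i(2) p by (intro power_strict_mono) (auto simp: norm_minus_commute)
        also have "\<dots> = (1/4::real)^i" by (simp add: power_mult_distrib[symmetric] power2_eq_square)
        finally have "1 < (1/4::real)^i / (cmod (lam i - m))^2" using p by simp
        thus False using N[OF i(1)] by simp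
      qed
      have K: "summable (\<lambda>i. norm (ww lam ep i / (lam i - m))) \<and> 1 + (\<Sum>i. ww lam ep i / (lam i - m)) \<noteq> 0"
        by (rule key[OF ctx mr mz sm])
      define S where "S = (\<Sum>i. w i / (lam i - m))"
      have Ssum: "summable (\<lambda>i. w i / (lam i - m))" using K unfolding w_def by (blast intro: summable_norm_cancel)
      have "c = (\<Sum>i. x i * cnj (v i))" by (simp add: c_def l2inner_def)
      also have "\<dots> = (\<Sum>i. (- c) * (w i / (lam i - m)))"
        by (rule arg_cong[where f=suminf]) (auto simp: xi uv[symmetric])
      also have "\<dots> = - c * S" unfolding S_def by (rule suminf_mult[OF Ssum])
      finally have "c * (1 + S) = 0" by (simp add: algebra_simps) (metis add.commute neg_eq_iff_add_eq_0)
      thus False using False K unfolding S_def w_def by simp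
    qed
  qed
  show ?thesis using ul2 vl2 ps nu nv by (intro bexI[of _ u] bexI[of _ v]) auto
qed



lemma geo4: "(\<Sum>i. (1/4::real)^i) = 4/3" and geo4s: "summable (\<lambda>i. (1/4::real)^i)"
  using suminf_geometric[of "1/4::real"] summable_geometric[of "1/4::real"] by auto

lemma opnorm_bound:
  assumes u: "\<And>i. cmod (u i) \<le> (1/2)^i" and v: "\<And>i. cmod (v i) \<le> B * (1/2)^i" and B: "0 \<le> B"
  shows "opnorm (rank_one u v) \<le> 6 * B"
  unfolding opnorm_def
proof (rule cSup_least)
  show "{l2norm (rank_one u v h) |h. h \<in> l2 \<and> l2norm h \<le> 1} \<noteq> {}"
    by (rule ccontr) (auto simp: l2_def l2norm_def elim!: allE[of _ "\<lambda>_. 0"])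
  fix y assume "y \<in> {l2norm (rank_one u v h) |h. h \<in> l2 \<and> l2norm h \<le> 1}"
  then obtain h where h: "h \<in> l2" "l2norm h \<le> 1" and y: "y = l2norm (rank_one u v h)" by auto
  have sh: "summable (\<lambda>i. (cmod (h i))^2)" using h(1) by (simp add: l2_def)
  have s1: "(\<Sum>i. (cmod (h i))^2) \<le> 1"
  proof -
    have "0 \<le> (\<Sum>i. (cmod (h i))^2)" by (intro suminf_nonneg sh) auto
    thus ?thesis using h(2) unfolding l2norm_def by simp
  qed
  define c where "c = l2inner h v"
  have pb: "norm (h i * cnj (v i)) \<le> B * ((1/4)^i + (cmod (h i))^2)" for i
  proof -
    have "norm (h i * cnj (v i)) = cmod (h i) * cmod (v i)" by (simp add: norm_mult)
    also have "\<dots> \<le> cmod (h i) * (B * (1/2)^i)" by (intro mult_left_mono v) auto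
    also have "\<dots> = B * ((1/2)^i * cmod (h i))" by simp
    also have "\<dots> \<le> B * ((1/4)^i + (cmod (h i))^2)"
    proof (intro mult_left_mono B)
      have "0 \<le> ((1/2::real)^i - cmod (h i))^2" by simp
      hence "2 * ((1/2::real)^i * cmod (h i)) \<le> (1/2)^i * (1/2)^i + (cmod (h i))^2"
        by (simp add: power2_eq_square algebra_simps)
      moreover have "(1/2::real)^i * (1/2)^i = (1/4)^i" by (rule half_sq)
      moreover have "0 \<le> (1/2::real)^i * cmod (h i)" by simp
      ultimately show "(1/2)^i * cmod (h i) \<le> (1/4)^i + (cmod (h i))^2" by linarith
    qed
    finally show ?thesis .
  qed
  have sb: "summable (\<lambda>i. B * ((1/4::real)^i + (cmod (h i))^2))"
    by (intro summable_mult summable_add geo4s sh)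
  have sn: "summable (\<lambda>i. norm (h i * cnj (v i)))"
    by (rule summable_comparison_test'[OF sb]) (use pb in simp)
  have "cmod c \<le> (\<Sum>i. norm (h i * cnj (v i)))"
    unfolding c_def l2inner_def by (rule summable_norm[OF sn])
  also have "\<dots> \<le> (\<Sum>i. B * ((1/4::real)^i + (cmod (h i))^2))"
    by (rule suminf_le[OF pb sn sb])
  also have "\<dots> = B * (4/3 + (\<Sum>i. (cmod (h i))^2))"
  proof -
    have "(\<Sum>i. B * ((1/4::real)^i + (cmod (h i))^2)) = B * (\<Sum>i. ((1/4::real)^i + (cmod (h i))^2))"
      by (rule suminf_mult) (intro summable_add geo4s sh)
    also have "(\<Sum>i. ((1/4::real)^i + (cmod (h i))^2)) = (\<Sum>i. (1/4::real)^i) + (\<Sum>i. (cmod (h i))^2)"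
      by (rule suminf_add[symmetric]) (intro geo4s, intro sh)
    finally show ?thesis by (simp only: geo4)
  qed
  also have "\<dots> \<le> B * (4/3 + 1)" using s1 B by (intro mult_left_mono) auto
  finally have cb: "cmod c \<le> 3 * B" using B by simp
  have r: "rank_one u v h = (\<lambda>i. c * u i)" by (simp add: rank_one_def c_def)
  have tb: "(cmod (c * u i))^2 \<le> (cmod c)^2 * (1/4)^i" for i
  proof -
    have "(cmod (c * u i))^2 = (cmod c)^2 * (cmod (u i))^2" by (simp add: norm_mult power_mult_distrib)
    also have "\<dots> \<le> (cmod c)^2 * ((1/2)^i)^2" by (intro mult_left_mono power_mono u) auto
    also have "((1/2::real)^i)^2 = (1/4)^i" using half_sq[of i] by (simp add: power2_eq_square)
    finally show ?thesis by simp
  qed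
  have st: "summable (\<lambda>i. (cmod c)^2 * (1/4::real)^i)" by (intro summable_mult geo4s)
  have "(\<Sum>i. (cmod (c * u i))^2) \<le> (\<Sum>i. (cmod c)^2 * (1/4::real)^i)"
    by (rule suminf_le[OF tb _ st]) (rule summable_comparison_test'[OF st], use tb in simp)
  also have "\<dots> = (cmod c)^2 * (4/3)" by (subst suminf_mult[OF geo4s]) (simp only: geo4)
  also have "\<dots> \<le> (2 * cmod c)^2" by (simp add: power_mult_distrib)
  finally have "sqrt (\<Sum>i. (cmod (c * u i))^2) \<le> 2 * cmod c"
    by (metis norm_ge_zero real_sqrt_le_iff real_sqrt_abs abs_of_nonneg mult_nonneg_nonneg zero_le_numeral)
  thus "y \<le> 6 * B" using y r cb unfolding l2norm_def by simp
qed

theorem theorem4: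
  fixes lam :: "nat \<Rightarrow> complex"
  assumes "inj lam"
    and "perfect_set (closure (range lam))"
  shows "(\<exists>u\<in>l2. \<exists>v\<in>l2.
            point_spectrum (diag_dom lam) (\<lambda>x i. diag_op lam x i + rank_one u v x i) = {})
       \<and> (\<forall>\<delta>>0. \<exists>u\<in>l2. \<exists>v\<in>l2.
            point_spectrum (diag_dom lam) (\<lambda>x i. diag_op lam x i + rank_one u v x i) = {}
            \<and> opnorm (rank_one u v) < \<delta>)"
proof
  show "\<exists>u\<in>l2. \<exists>v\<in>l2.
            point_spectrum (diag_dom lam) (\<lambda>x i. diag_op lam x i + rank_one u v x i) = {}"
    using construct[OF assms, of 1] by auto
  show "\<forall>\<delta>>0. \<exists>u\<in>l2. \<exists>v\<in>l2.
            point_spectrum (diag_dom lam) (\<lambda>x i. diag_op lam x i + rank_one u v x i) = {}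
            \<and> opnorm (rank_one u v) < \<delta>"
  proof (intro allI impI)
    fix \<delta> :: real assume d: "\<delta> > 0"
    define eta where "eta = min 1 (\<delta> / (7 * exp 2))"
    have eta: "0 < eta" "eta \<le> 1" using d by (auto simp: eta_def)
    obtain u v where uv: "u \<in> l2" "v \<in> l2"
      "point_spectrum (diag_dom lam) (\<lambda>x i. diag_op lam x i + rank_one u v x i) = {}"
      "\<And>i. cmod (u i) \<le> (1/2)^i" "\<And>i. cmod (v i) \<le> eta * exp 2 * (1/2)^i"
      using construct[OF assms eta] by blast
    have "opnorm (rank_one u v) \<le> 6 * (eta * exp 2)"
      by (rule opnorm_bound[OF uv(4) uv(5)]) (use eta in simp)
    also have "\<dots> < \<delta>"
    proof -
      have "eta * exp 2 \<le> \<delta> / 7" unfolding eta_def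
        by (metis min.cobounded2 divide_divide_eq_left exp_gt_zero pos_le_divide_eq mult.commute)
      thus ?thesis using d by linarith
    qed
    finally show "\<exists>u\<in>l2. \<exists>v\<in>l2.
            point_spectrum (diag_dom lam) (\<lambda>x i. diag_op lam x i + rank_one u v x i) = {}
            \<and> opnorm (rank_one u v) < \<delta>" using uv by blast
  qed
qed


end
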